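(* Let $f,g\in\mathrm{Diffeo}^-(\mathbb{R})$ with $f(0)=g(0)=0$ and $f\circ f=g\circ g$. Suppose $(T_0f)\circ(T_0f)\neq X$. Then $T_0f=T_0g$, and $f$ is conjugate to $g$ by an element of $\mathrm{Diffeo}^+(\mathbb{R})$, i.e. $f=h^{-1}\circ g\circ h$ for some $h\in\mathrm{Diffeo}^+(\mathbb{R})$.
   Context: $\mathrm{Diffeo}(\mathbb{R})$ is the group of $C^\infty$ diffeomorphisms of $\mathbb{R}$ under composition; $\mathrm{Diffeo}^+(\mathbb{R})$ (resp. $\mathrm{Diffeo}^-(\mathbb{R})$) is the set of orientation-preserving (resp. orientation-reversing) diffeomorphisms. For a diffeomorphism $\phi$ with $\phi(0)=0$, $T_0\phi=\phi'(0)X+\frac{\phi''(0)}{2}X^2+\cdots$ is its Taylor series at $0$, viewed as a formal power series under formal composition; $X$ denotes the identity series. *)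

theory Defs
  imports "HOL-Analysis.Analysis" "HOL-Computational_Algebra.Formal_Power_Series"
begin

definition smooth :: "(real \<Rightarrow> real) \<Rightarrow> bool" where
  "smooth f \<longleftrightarrow> (\<forall>n x. ((deriv ^^ n) f) differentiable (at x))"

definition diffeo :: "(real \<Rightarrow> real) \<Rightarrow> bool" where
  "diffeo f \<longleftrightarrow> bij f \<and> smooth f \<and> smooth (inv f)"

definition diffeo_plus :: "(real \<Rightarrow> real) \<Rightarrow> bool" where
  "diffeo_plus f \<longleftrightarrow> diffeo f \<and> strict_mono f"

definition diffeo_minus :: "(real \<Rightarrow> real) \<Rightarrow> bool" where
  "diffeo_minus f \<longleftrightarrow> diffeo f \<and> (\<forall>x y. x < y \<longrightarrow> f y < f x)"

definition taylor0 :: "(real \<Rightarrow> real) \<Rightarrow> real fps" where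
  "taylor0 f = Abs_fps (\<lambda>n. (deriv ^^ n) f 0 / fact n)"

end

theory Submission
  imports Defs
begin

notation fps_nth (infixl "$$" 75)


lemma pow_agree:
  fixes B C :: "real fps"
  assumes B0: "B$$0 = 0" and C0: "C$$0 = 0" and agr: "\<forall>j<k. B$$j = C$$j"
  shows "j < k \<or> (j = k \<and> i \<ge> 2) \<Longrightarrow> (B^i)$$j = (C^i)$$j"
proof (induction i arbitrary: j)
  case 0
  then show ?case by simp
next
  case (Suc i)
  have "(B^Suc i)$$j = (\<Sum>l=0..j. B$$l * (B^i)$$(j-l))" by (simp add: fps_mult_nth)
  also have "\<dots> = (\<Sum>l=0..j. C$$l * (C^i)$$(j-l))"
  proof (rule sum.cong[OF refl])
    fix l assume l: "l \<in> {0..j}"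
    show "B$$l * (B^i)$$(j-l) = C$$l * (C^i)$$(j-l)"
    proof (cases "l = 0")
      case True then show ?thesis using B0 C0 by simp
    next
      case False
      show ?thesis
      proof (cases "j < k")
        case True
        have "j - l < k" using True by simp
        then have "(B^i)$$(j-l) = (C^i)$$(j-l)" using Suc.IH by blast
        moreover have "B$$l = C$$l" using agr True l by auto
        ultimately show ?thesis by simp
      next
        case False2: False
        with Suc.prems have jk: "j = k" "i \<ge> 1" by auto
        show ?thesis
        proof (cases "l = k")
          case True
          show ?thesis using True jk B0 C0 by (simp add: power_0_left fps_power_zeroth)
        next
          case False3: False
          then have lk: "l < k" using l jk by auto
          have "j - l < k" using jk False l lk by auto
          then have "(B^i)$$(j-l) = (C^i)$$(j-l)" using Suc.IH by blast
          moreover have "B$$l = C$$l" using agr lk by auto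
          ultimately show ?thesis by simp
        qed
      qed
    qed
  qed
  also have "\<dots> = (C^Suc i)$$j" by (simp add: fps_mult_nth)
  finally show ?case .
qed

lemma comp_agree:
  fixes A B C :: "real fps"
  assumes B0: "B$$0 = 0" and C0: "C$$0 = 0" and agr: "\<forall>j<k. B$$j = C$$j" and jk: "j < k"
  shows "(A oo B)$$j = (A oo C)$$j"
  unfolding fps_compose_nth
  by (rule sum.cong[OF refl]) (use pow_agree[OF B0 C0 agr] jk in auto)

lemma comp_diff:
  fixes A B C :: "real fps"
  assumes B0: "B$$0 = 0" and C0: "C$$0 = 0" and agr: "\<forall>j<k. B$$j = C$$j" and k1: "k \<ge> 1"
  shows "(A oo B)$$k - (A oo C)$$k = A$$1 * (B$$k - C$$k)"
proof -
  have "(A oo B)$$k - (A oo C)$$k = (\<Sum>i=0..k. A$$i * ((B^i)$$k - (C^i)$$k))"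
    unfolding fps_compose_nth by (simp add: sum_subtractf right_diff_distrib)
  also have "\<dots> = (\<Sum>i=0..k. if i = 1 then A$$1 * (B$$k - C$$k) else 0)"
  proof (rule sum.cong[OF refl])
    fix i assume i: "i \<in> {0..k}"
    show "A$$i * ((B^i)$$k - (C^i)$$k) = (if i = 1 then A$$1 * (B$$k - C$$k) else 0)"
    proof (cases "i = 0 \<or> i = 1")
      case True then show ?thesis using k1 by auto
    next
      case False
      then have "(B^i)$$k = (C^i)$$k" using pow_agree[OF B0 C0 agr] by auto
      then show ?thesis using False by auto
    qed
  qed
  also have "\<dots> = A$$1 * (B$$k - C$$k)" using k1 by (simp add: sum.delta)
  finally show ?thesis .
qed

lemma comp_diff_left:
  fixes A A' B :: "real fps"
  assumes B0: "B$$0 = 0" and agr: "\<forall>j<k. A$$j = A'$$j"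
  shows "(A oo B)$$k - (A' oo B)$$k = (A$$k - A'$$k) * (B$$1)^k"
proof -
  have "(A oo B)$$k - (A' oo B)$$k = (\<Sum>i=0..k. (A$$i - A'$$i) * (B^i)$$k)"
    unfolding fps_compose_nth by (simp add: sum_subtractf left_diff_distrib)
  also have "\<dots> = (\<Sum>i=0..k. if i = k then (A$$k - A'$$k) * (B$$1)^k else 0)"
  proof (rule sum.cong[OF refl])
    fix i assume i: "i \<in> {0..k}"
    show "(A$$i - A'$$i) * (B^i)$$k = (if i = k then (A$$k - A'$$k) * (B$$1)^k else 0)"
      using agr i startsby_zero_power_nth_same[OF B0, of k] by auto
  qed
  also have "\<dots> = (A$$k - A'$$k) * (B$$1)^k" by (simp add: sum.delta)
  finally show ?thesis .
qed

lemma powXE: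
  fixes E :: "real fps"
  assumes Ep: "\<forall>j<p. E$$j = 0" and p2: "p \<ge> 2"
  shows "m < i + 2*p - 2 \<Longrightarrow> ((fps_X + E)^i)$$m = (if m = i then 1 else 0) + of_nat i * E$$(m+1-i)"
proof (induction i arbitrary: m)
  case 0
  then show ?case by simp
next
  case (Suc i)
  define P where "P = (fps_X + E)^i"
  have E0: "E$$0 = 0" using Ep p2 by auto
  have Pm: "(E*P)$$m = (if i \<le> m then E$$(m-i) else 0)"
  proof -
    have "(E*P)$$m = (\<Sum>k=0..m. E$$k * P$$(m-k))" by (simp add: fps_mult_nth)
    also have "\<dots> = (\<Sum>k=0..m. if k = m - i \<and> i \<le> m then E$$(m-i) else 0)"
    proof (rule sum.cong[OF refl])
      fix k assume k: "k \<in> {0..m}"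
      show "E$$k * P$$(m-k) = (if k = m - i \<and> i \<le> m then E$$(m-i) else 0)"
      proof (cases "k < p")
        case True
        then show ?thesis using Ep by auto
      next
        case False
        have "m - k < i + 2*p - 2" using False Suc.prems p2 by linarith
        then have "P$$(m-k) = (if m-k = i then 1 else 0) + of_nat i * E$$(m-k+1-i)"
          using Suc.IH P_def by blast
        moreover have "m-k+1-i < p" using False Suc.prems p2 k by auto
        ultimately have "P$$(m-k) = (if m-k = i then 1 else 0)" using Ep by auto
        then show ?thesis using k by auto
      qed
    qed
    also have "\<dots> = (if i \<le> m then E$$(m-i) else 0)"
      by (cases "i \<le> m") (auto simp: sum.delta)
    finally show ?thesis .
  qed
  have "((fps_X + E)^Suc i)$$m = (fps_X * P)$$m + (E*P)$$m"
    by (simp add: P_def distrib_right)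
  also have "\<dots> = (if m = 0 then 0 else P$$(m-1)) + (if i \<le> m then E$$(m-i) else 0)"
    using Pm by (simp add: fps_X_mult_nth)
  also have "\<dots> = (if m = Suc i then 1 else 0) + of_nat (Suc i) * E$$(m+1-Suc i)"
  proof (cases m)
    case 0
    then show ?thesis using E0 by auto
  next
    case (Suc m')
    have "m' < i + 2*p - 2" using Suc Suc.prems by auto
    then have "P$$m' = (if m' = i then 1 else 0) + of_nat i * E$$(m'+1-i)"
      using Suc.IH P_def by blast
    moreover have "\<not> i \<le> m \<Longrightarrow> E$$(m - i) = 0" using E0 by auto
    ultimately show ?thesis using Suc by (auto simp: algebra_simps)
  qed
  finally show ?case .
qed

lemma compXE:
  fixes D E :: "real fps"
  assumes Dn: "\<forall>j<n. D$$j = 0" and Ep: "\<forall>j<p. E$$j = 0" and n2: "n \<ge> 2" and p2: "p \<ge> 2"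
  shows "(D oo (fps_X + E))$$(n+p-1) = D$$(n+p-1) + of_nat n * D$$n * E$$p"
proof -
  let ?m = "n+p-1"
  have "(D oo (fps_X + E))$$?m = (\<Sum>i=0..?m. D$$i * ((fps_X + E)^i)$$?m)"
    by (simp add: fps_compose_nth)
  also have "\<dots> = (\<Sum>i=0..?m. (if i = ?m then D$$?m else 0) + (if i = n then of_nat n * D$$n * E$$p else 0))"
  proof (rule sum.cong[OF refl])
    fix i assume i: "i \<in> {0..?m}"
    show "D$$i * ((fps_X + E)^i)$$?m = (if i = ?m then D$$?m else 0) + (if i = n then of_nat n * D$$n * E$$p else 0)"
    proof (cases "i < n")
      case True
      then show ?thesis using Dn n2 p2 by auto
    next
      case False
      then have "((fps_X + E)^i)$$?m = (if ?m = i then 1 else 0) + of_nat i * E$$(?m+1-i)"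
        using powXE[OF Ep p2, of ?m i] p2 by auto
      moreover have "i \<noteq> n \<Longrightarrow> E$$(?m+1-i) = 0" using False i Ep p2 by auto
      moreover have "i = n \<Longrightarrow> ?m+1-i = p" using n2 p2 by auto
      moreover have "n \<noteq> ?m" using p2 by auto
      ultimately show ?thesis by (auto simp: algebra_simps)
    qed
  qed
  also have "\<dots> = D$$?m + of_nat n * D$$n * E$$p"
    using n2 p2 by (simp add: sum.distrib sum.delta)
  finally show ?thesis .
qed

lemma commutator:
  fixes D E :: "real fps"
  assumes Dn: "\<forall>j<n. D$$j = 0" and Ep: "\<forall>j<p. E$$j = 0" and n2: "n \<ge> 2" and p2: "p \<ge> 2"
    and comm: "(fps_X + D) oo (fps_X + E) = (fps_X + E) oo (fps_X + D)"
  shows "(of_nat n - of_nat p) * D$$n * E$$p = 0"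
proof -
  have D0: "(fps_X + D)$$0 = 0" and E0: "(fps_X + E)$$0 = 0" using Dn Ep n2 p2 by auto
  have 1: "((fps_X + D) oo (fps_X + E)) = (fps_X + E) + (D oo (fps_X + E))"
    by (simp add: fps_compose_add_distrib fps_X_fps_compose_startby0[OF E0])
  have 2: "((fps_X + E) oo (fps_X + D)) = (fps_X + D) + (E oo (fps_X + D))"
    by (simp add: fps_compose_add_distrib fps_X_fps_compose_startby0[OF D0])
  have a: "(D oo (fps_X + E))$$(n+p-1) = D$$(n+p-1) + of_nat n * D$$n * E$$p"
    by (rule compXE[OF Dn Ep n2 p2])
  have b: "(E oo (fps_X + D))$$(p+n-1) = E$$(p+n-1) + of_nat p * E$$p * D$$n"
    by (rule compXE[OF Ep Dn p2 n2])
  have "p + n - 1 = n + p - 1" by simp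
  from comm have "((fps_X + D) oo (fps_X + E))$$(n+p-1) = ((fps_X + E) oo (fps_X + D))$$(n+p-1)" by simp
  then have "(fps_X + E)$$(n+p-1) + D$$(n+p-1) + of_nat n * D$$n * E$$p = (fps_X + D)$$(n+p-1) + E$$(n+p-1) + of_nat p * E$$p * D$$n"
    using a b 1 2 by (simp add: add.commute)
  then show ?thesis by (simp add: algebra_simps)
qed

lemma compose_nth_1:
  fixes A B :: "real fps"
  assumes "B$$0 = 0"
  shows "(A oo B)$$1 = A$$1 * B$$1"
  using assms by (simp add: fps_compose_nth)

lemma pos_pow_eq_self:
  fixes a :: real
  assumes a: "a > 0" and n: "n \<ge> 2" and e: "(-a)^n = a"
  shows "a = 1 \<and> even n"
proof -
  have ev: "even n"
  proof (rule ccontr)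
    assume "odd n"
    then have "(-a)^n = - (a^n)" by (simp add: power_minus_odd)
    moreover have "a^n > 0" using a by simp
    ultimately show False using e a by linarith
  qed
  then have "a^n = a" using e by (simp add: power_minus_even)
  moreover have "n = Suc (n-1)" using n by simp
  then have "a^n = a * a^(n-1)" by (metis power_Suc)
  ultimately have "a^(n-1) = 1" using a by simp
  then have "norm a = 1" using power_eq_1_iff[of a "n-1"] n by auto
  then show ?thesis using a ev by simp
qed

lemma formal_main:
  fixes \<phi> \<psi> :: "real fps"
  assumes \<phi>0: "\<phi>$$0 = 0" and \<psi>0: "\<psi>$$0 = 0" and \<phi>1: "\<phi>$$1 < 0" and \<psi>1: "\<psi>$$1 < 0"
    and eq: "\<phi> oo \<phi> = \<psi> oo \<psi>" and neX: "\<phi> oo \<phi> \<noteq> fps_X"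
  shows "\<phi> = \<psi>"
proof (rule ccontr)
  assume ne: "\<phi> \<noteq> \<psi>"
  then have ex: "\<exists>n. \<phi>$$n \<noteq> \<psi>$$n" by (simp add: fps_eq_iff)
  define n where "n = (LEAST n. \<phi>$$n \<noteq> \<psi>$$n)"
  have cn: "\<phi>$$n \<noteq> \<psi>$$n" unfolding n_def by (rule LeastI_ex[OF ex])
  have agr: "\<forall>j<n. \<phi>$$j = \<psi>$$j" unfolding n_def using not_less_Least by blast
  have "(\<phi> oo \<phi>)$$1 = (\<psi> oo \<psi>)$$1" using eq by simp
  then have "\<phi>$$1 * \<phi>$$1 = \<psi>$$1 * \<psi>$$1" using compose_nth_1[OF \<phi>0, of \<phi>] compose_nth_1[OF \<psi>0, of \<psi>] by metis
  then have "(\<phi>$$1 - \<psi>$$1) * (\<phi>$$1 + \<psi>$$1) = 0" by (simp add: algebra_simps)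
  moreover have "\<phi>$$1 + \<psi>$$1 \<noteq> 0" using \<phi>1 \<psi>1 by simp
  ultimately have e1: "\<phi>$$1 = \<psi>$$1" by simp
  have n2: "n \<ge> 2" using cn e1 \<phi>0 \<psi>0 by (cases n; cases "n - 1"; auto)
  have d1: "(\<phi> oo \<phi>)$$n - (\<phi> oo \<psi>)$$n = \<phi>$$1 * (\<phi>$$n - \<psi>$$n)"
    using comp_diff[OF \<phi>0 \<psi>0 agr] n2 by simp
  have d2: "(\<phi> oo \<psi>)$$n - (\<psi> oo \<psi>)$$n = (\<phi>$$n - \<psi>$$n) * (\<psi>$$1)^n"
    by (rule comp_diff_left[OF \<psi>0 agr])
  have "(\<phi>$$n - \<psi>$$n) * (\<phi>$$1 + (\<phi>$$1)^n) = 0"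
    using d1 d2 eq e1 by (simp add: algebra_simps)
  then have "(\<phi>$$1)^n = - \<phi>$$1" using cn by simp
  then have "(-(-\<phi>$$1))^n = -\<phi>$$1" by simp
  then have a1: "-\<phi>$$1 = 1" and nev: "even n" using pos_pow_eq_self[of "-\<phi>$$1" n] \<phi>1 n2 by auto
  have p1: "\<phi>$$1 = -1" using a1 by simp
  have q1: "\<psi>$$1 = -1" using a1 e1 by simp
  define F where "F = \<phi> oo \<phi>"
  have F0: "F$$0 = 0" unfolding F_def using \<phi>0 by simp
  have F1: "F$$1 = 1" unfolding F_def using compose_nth_1[OF \<phi>0, of \<phi>] p1 by simp
  have exF: "\<exists>p. F$$p \<noteq> fps_X$$p" using neX F_def by (simp add: fps_eq_iff)
  define p where "p = (LEAST p. F$$p \<noteq> fps_X$$p)"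
  have cp: "F$$p \<noteq> fps_X$$p" unfolding p_def by (rule LeastI_ex[OF exF])
  have agrF: "\<forall>j<p. F$$j = fps_X$$j" unfolding p_def using not_less_Least by blast
  have p2: "p \<ge> 2" using cp F0 F1 by (cases p; cases "p - 1"; auto simp: fps_X_nth)
  define E where "E = F - fps_X"
  have Ep: "\<forall>j<p. E$$j = 0" using agrF E_def by simp
  have EpF: "E$$p = F$$p" using p2 E_def by (simp add: fps_X_nth)
  have Epne: "E$$p \<noteq> 0" using cp p2 EpF by (simp add: fps_X_nth)
  have FE: "F = fps_X + E" using E_def by simp
  have commF: "\<phi> oo F = F oo \<phi>" unfolding F_def using fps_compose_assoc[of \<phi> \<phi> \<phi>] \<phi>0 by simp
  have X0: "(fps_X::real fps)$$0 = 0" by simp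
  have Xp: "fps_X$$p = (0::real)" using p2 by (simp add: fps_X_nth)
  have h1: "(\<phi> oo F)$$p - (\<phi> oo fps_X)$$p = \<phi>$$1 * (F$$p - fps_X$$p)"
    using comp_diff[OF F0 X0 agrF] p2 by simp
  have h1': "(\<phi> oo F)$$p = \<phi>$$p - F$$p" using h1 Xp p1 by simp
  have h2: "(F oo \<phi>)$$p - (fps_X oo \<phi>)$$p = (F$$p - fps_X$$p) * (\<phi>$$1)^p"
    by (rule comp_diff_left[OF \<phi>0 agrF])
  have h2': "(F oo \<phi>)$$p = \<phi>$$p + F$$p * (-1)^p"
    using h2 Xp p1 fps_X_fps_compose_startby0[OF \<phi>0] by simp
  have "F$$p * ((-1)^p + 1) = 0" using h1' h2' commF by (simp add: algebra_simps)
  then have "(-1::real)^p = -1" using cp Xp by (simp add: add_eq_0_iff2)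
  then have podd: "odd p" by (metis neg_one_even_power one_neq_neg_one)
  define I where "I = fps_inv \<psi>"
  have I0: "I$$0 = 0" unfolding I_def by (simp add: fps_inv_def)
  have q1ne: "\<psi>$$1 \<noteq> 0" using q1 by simp
  have \<psi>I: "\<psi> oo I = fps_X" unfolding I_def by (rule fps_inv_right[OF \<psi>0 q1ne])
  have I\<psi>: "I oo \<psi> = fps_X" unfolding I_def by (rule fps_inv[OF \<psi>0 q1ne])
  define \<theta> where "\<theta> = I oo \<phi>"
  have \<theta>0: "\<theta>$$0 = 0" unfolding \<theta>_def using I0 by simp
  have \<psi>\<theta>: "\<psi> oo \<theta> = \<phi>"
    unfolding \<theta>_def using fps_compose_assoc[OF \<phi>0 I0, of \<psi>] \<psi>I fps_X_fps_compose_startby0[OF \<phi>0] by simp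
  have \<theta>agr: "\<forall>j<n. \<theta>$$j = fps_X$$j"
  proof (intro allI impI)
    fix j assume "j < n"
    then show "\<theta>$$j = fps_X$$j"
    proof (induction j rule: less_induct)
      case (less j)
      show ?case
      proof (cases "j = 0")
        case True then show ?thesis using \<theta>0 by simp
      next
        case False
        have ag: "\<forall>i<j. \<theta>$$i = fps_X$$i" using less by auto
        have "(\<psi> oo \<theta>)$$j - (\<psi> oo fps_X)$$j = \<psi>$$1 * (\<theta>$$j - fps_X$$j)"
          using comp_diff[OF \<theta>0 X0 ag] False by simp
        then have "\<phi>$$j - \<psi>$$j = \<psi>$$1 * (\<theta>$$j - fps_X$$j)" using \<psi>\<theta> by simp
        then show ?thesis using agr less.prems q1 by simp
      qed
    qed
  qed
  have "(\<psi> oo \<theta>)$$n - (\<psi> oo fps_X)$$n = \<psi>$$1 * (\<theta>$$n - fps_X$$n)"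
    using comp_diff[OF \<theta>0 X0 \<theta>agr] n2 by simp
  then have "\<phi>$$n - \<psi>$$n = - \<theta>$$n" using \<psi>\<theta> q1 n2 by (simp add: fps_X_nth)
  then have \<theta>n: "\<theta>$$n \<noteq> 0" using cn by simp
  define D where "D = \<theta> - fps_X"
  have Dn: "\<forall>j<n. D$$j = 0" using \<theta>agr D_def by simp
  have Dnn: "D$$n = \<theta>$$n" using D_def n2 by (simp add: fps_X_nth)
  have \<theta>D: "\<theta> = fps_X + D" using D_def by simp
  have \<psi>\<psi>0: "(\<psi> oo \<psi>)$$0 = 0" using \<psi>0 by simp
  have \<psi>\<phi>0: "(\<psi> oo \<phi>)$$0 = 0" using \<psi>0 by simp
  have c1: "F oo \<theta> = \<psi> oo \<phi>"
  proof -
    have "F oo \<theta> = (\<psi> oo \<psi>) oo (I oo \<phi>)" using F_def eq \<theta>_def by simp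
    also have "\<dots> = ((\<psi> oo \<psi>) oo I) oo \<phi>" using fps_compose_assoc[OF \<phi>0 I0] by simp
    also have "(\<psi> oo \<psi>) oo I = \<psi> oo (\<psi> oo I)" using fps_compose_assoc[OF I0 \<psi>0] by simp
    also have "\<dots> = \<psi>" using \<psi>I by simp
    finally show ?thesis .
  qed
  have c2: "\<theta> oo F = \<psi> oo \<phi>"
  proof -
    have F0': "(\<phi> oo \<phi>)$$0 = 0" using \<phi>0 by simp
    have "\<theta> oo F = (I oo \<phi>) oo (\<phi> oo \<phi>)" using F_def \<theta>_def by simp
    also have "\<dots> = I oo (\<phi> oo (\<phi> oo \<phi>))" using fps_compose_assoc[OF F0' \<phi>0, of I] by simp
    also have "\<phi> oo (\<phi> oo \<phi>) = (\<psi> oo \<psi>) oo \<phi>" using fps_compose_assoc[OF \<phi>0 \<phi>0, of \<phi>] eq by simp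
    also have "\<dots> = \<psi> oo (\<psi> oo \<phi>)" using fps_compose_assoc[OF \<phi>0 \<psi>0, of \<psi>] by simp
    also have "I oo (\<psi> oo (\<psi> oo \<phi>)) = (I oo \<psi>) oo (\<psi> oo \<phi>)" using fps_compose_assoc[OF \<psi>\<phi>0 \<psi>0, of I] by simp
    also have "\<dots> = \<psi> oo \<phi>" using I\<psi> fps_X_fps_compose_startby0[OF \<psi>\<phi>0] by simp
    finally show ?thesis .
  qed
  have "(fps_X + D) oo (fps_X + E) = (fps_X + E) oo (fps_X + D)"
    using c1 c2 \<theta>D FE by simp
  then have "(of_nat n - of_nat p) * D$$n * E$$p = 0"
    by (rule commutator[OF Dn Ep n2 p2])
  then have "n = p" using Dnn \<theta>n Epne by simp
  then show False using nev podd by simp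
qed



lemma funpow_deriv_Suc: "(deriv ^^ Suc n) f = (deriv ^^ n) (deriv f)"
  by (simp add: funpow_Suc_right del: funpow.simps)

lemma smooth_iff: "smooth f \<longleftrightarrow> (\<forall>x. f differentiable (at x)) \<and> smooth (deriv f)"
proof
  assume s: "smooth f"
  have "\<forall>x. f differentiable (at x)" using s unfolding smooth_def by (metis funpow_0)
  moreover have "smooth (deriv f)" unfolding smooth_def
  proof (intro allI)
    fix n x show "(deriv ^^ n) (deriv f) differentiable (at x)"
      using s unfolding smooth_def by (metis funpow_deriv_Suc)
  qed
  ultimately show "(\<forall>x. f differentiable (at x)) \<and> smooth (deriv f)" by blast
next
  assume a: "(\<forall>x. f differentiable (at x)) \<and> smooth (deriv f)"
  show "smooth f" unfolding smooth_def
  proof (intro allI)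
    fix n x show "(deriv ^^ n) f differentiable (at x)"
      using a unfolding smooth_def by (cases n) (auto simp: funpow_deriv_Suc simp del: funpow.simps)
  qed
qed

lemma smooth_coinduct:
  assumes "P f" and step: "\<And>u. P u \<Longrightarrow> (\<forall>x. u differentiable (at x)) \<and> P (deriv u)"
  shows "smooth f"
proof -
  have "\<forall>u. P u \<longrightarrow> P ((deriv ^^ n) u)" for n
    by (induction n) (auto simp: funpow_deriv_Suc step simp del: funpow.simps)
  then show ?thesis unfolding smooth_def using assms by blast
qed

lemma smooth_diff: "smooth f \<Longrightarrow> f differentiable (at x)"
  using smooth_iff by blast

lemma smooth_deriv: "smooth f \<Longrightarrow> smooth (deriv f)"
  using smooth_iff by blast

lemma smooth_DERIV: "smooth f \<Longrightarrow> (f has_real_derivative deriv f x) (at x)"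
  using smooth_diff DERIV_deriv_iff_real_differentiable by blast

lemma deriv_const: "deriv (\<lambda>x. c) = (\<lambda>x::real. 0::real)"
  by (rule ext, rule DERIV_imp_deriv) simp

lemma deriv_ident: "deriv (\<lambda>x. x) = (\<lambda>x::real. 1::real)"
  by (rule ext, rule DERIV_imp_deriv) simp

lemma smooth_const: "smooth (\<lambda>x. c)"
  by (rule smooth_coinduct[where P="\<lambda>u. \<exists>c. u = (\<lambda>x. c)"]) (auto simp: deriv_const)

lemma smooth_ident: "smooth (\<lambda>x. x)"
  by (rule smooth_coinduct[where P="\<lambda>u. u = (\<lambda>x. x) \<or> (\<exists>c. u = (\<lambda>x. c))"]) (auto simp: deriv_const deriv_ident)

lemma deriv_mult_fun:
  fixes u v :: "real \<Rightarrow> real"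
  assumes "\<And>x. u differentiable (at x)" "\<And>x. v differentiable (at x)"
  shows "deriv (\<lambda>x. u x * v x) = (\<lambda>x. deriv u x * v x + u x * deriv v x)"
proof (rule ext, rule DERIV_imp_deriv)
  fix x
  have "(u has_real_derivative deriv u x) (at x)" "(v has_real_derivative deriv v x) (at x)"
    using assms DERIV_deriv_iff_real_differentiable by blast+
  from DERIV_mult[OF this] show "((\<lambda>x. u x * v x) has_real_derivative deriv u x * v x + u x * deriv v x) (at x)"
    by (simp add: algebra_simps)
qed

lemma deriv_add_fun:
  fixes u v :: "real \<Rightarrow> real"
  assumes "\<And>x. u differentiable (at x)" "\<And>x. v differentiable (at x)"
  shows "deriv (\<lambda>x. u x + v x) = (\<lambda>x. deriv u x + deriv v x)"
proof (rule ext, rule DERIV_imp_deriv)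
  fix x
  have "(u has_real_derivative deriv u x) (at x)" "(v has_real_derivative deriv v x) (at x)"
    using assms DERIV_deriv_iff_real_differentiable by blast+
  from DERIV_add[OF this] show "((\<lambda>x. u x + v x) has_real_derivative deriv u x + deriv v x) (at x)" .
qed

lemma deriv_diff_fun:
  fixes u v :: "real \<Rightarrow> real"
  assumes "\<And>x. u differentiable (at x)" "\<And>x. v differentiable (at x)"
  shows "deriv (\<lambda>x. u x - v x) = (\<lambda>x. deriv u x - deriv v x)"
proof (rule ext, rule DERIV_imp_deriv)
  fix x
  have "(u has_real_derivative deriv u x) (at x)" "(v has_real_derivative deriv v x) (at x)"
    using assms DERIV_deriv_iff_real_differentiable by blast+
  from DERIV_diff[OF this] show "((\<lambda>x. u x - v x) has_real_derivative deriv u x - deriv v x) (at x)" .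
qed

lemma deriv_comp_fun:
  fixes u v :: "real \<Rightarrow> real"
  assumes "\<And>x. u differentiable (at x)" "\<And>x. v differentiable (at x)"
  shows "deriv (\<lambda>x. u (v x)) = (\<lambda>x. deriv u (v x) * deriv v x)"
proof (rule ext, rule DERIV_imp_deriv)
  fix x
  have "(u has_real_derivative deriv u (v x)) (at (v x))" "(v has_real_derivative deriv v x) (at x)"
    using assms DERIV_deriv_iff_real_differentiable by blast+
  from DERIV_chain2[OF this] show "((\<lambda>x. u (v x)) has_real_derivative deriv u (v x) * deriv v x) (at x)" .
qed

inductive prodsum :: "(real \<Rightarrow> real) \<Rightarrow> bool" where
  ps_mult: "smooth a \<Longrightarrow> smooth b \<Longrightarrow> prodsum (\<lambda>x. a x * b x)"
| ps_add: "prodsum u \<Longrightarrow> prodsum v \<Longrightarrow> prodsum (\<lambda>x. u x + v x)"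

lemma prodsum_step: "prodsum u \<Longrightarrow> (\<forall>x. u differentiable (at x)) \<and> prodsum (deriv u)"
proof (induction rule: prodsum.induct)
  case (ps_mult a b)
  have da: "\<And>x. a differentiable (at x)" and db: "\<And>x. b differentiable (at x)"
    using ps_mult smooth_diff by blast+
  have "prodsum (\<lambda>x. deriv a x * b x + a x * deriv b x)"
    using ps_mult by (intro prodsum.intros) (auto intro: smooth_deriv)
  then show ?case using da db by (simp add: deriv_mult_fun)
next
  case (ps_add u v)
  then show ?case by (auto simp: deriv_add_fun intro: prodsum.intros)
qed

lemma smooth_mult: "smooth a \<Longrightarrow> smooth b \<Longrightarrow> smooth (\<lambda>x. a x * b x)"
  by (rule smooth_coinduct[where P=prodsum]) (auto intro: prodsum.intros dest: prodsum_step)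

lemma smooth_add: "smooth a \<Longrightarrow> smooth b \<Longrightarrow> smooth (\<lambda>x. a x + b x)"
proof -
  assume a: "smooth a" and b: "smooth b"
  have "prodsum (\<lambda>x. (\<lambda>x. a x * 1) x + (\<lambda>x. b x * 1) x)"
    using a b smooth_const by (intro prodsum.intros) auto
  then show ?thesis by (intro smooth_coinduct[where P=prodsum]) (auto dest: prodsum_step)
qed

lemma smooth_diff_fun: "smooth a \<Longrightarrow> smooth b \<Longrightarrow> smooth (\<lambda>x. a x - b x)"
proof -
  assume a: "smooth a" and b: "smooth b"
  have "smooth (\<lambda>x. b x * (-1))" using b smooth_const by (rule smooth_mult)
  from smooth_add[OF a this] show ?thesis by simp
qed

inductive compsum :: "(real \<Rightarrow> real) \<Rightarrow> (real \<Rightarrow> real) \<Rightarrow> bool" for g where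
  cs_mult: "smooth a \<Longrightarrow> smooth b \<Longrightarrow> compsum g (\<lambda>x. a (g x) * b x)"
| cs_add: "compsum g u \<Longrightarrow> compsum g v \<Longrightarrow> compsum g (\<lambda>x. u x + v x)"

lemma compsum_step:
  assumes g: "smooth g"
  shows "compsum g u \<Longrightarrow> (\<forall>x. u differentiable (at x)) \<and> compsum g (deriv u)"
proof (induction rule: compsum.induct)
  case (cs_mult a b)
  have da: "\<And>x. a differentiable (at x)" and db: "\<And>x. b differentiable (at x)"
    and dg: "\<And>x. g differentiable (at x)"
    using cs_mult g smooth_diff by blast+
  have dag: "\<And>x. (\<lambda>x. a (g x)) differentiable (at x)"
    using da dg by (simp add: differentiable_chain_at[unfolded o_def])
  have "compsum g (\<lambda>x. (\<lambda>x. deriv a (g x) * (deriv g x * b x)) x + (\<lambda>x. a (g x) * deriv b x) x)"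
    using cs_mult g by (intro compsum.intros) (auto intro: smooth_deriv smooth_mult)
  then have "compsum g (deriv (\<lambda>x. a (g x) * b x))"
    using dag db da dg by (simp add: deriv_mult_fun deriv_comp_fun algebra_simps)
  moreover have "\<forall>x. (\<lambda>x. a (g x) * b x) differentiable (at x)"
    using dag db by auto
  ultimately show ?case by blast
next
  case (cs_add u v)
  then show ?case by (auto simp: deriv_add_fun intro: compsum.intros)
qed

lemma smooth_comp: "smooth a \<Longrightarrow> smooth g \<Longrightarrow> smooth (\<lambda>x. a (g x))"
proof -
  assume a: "smooth a" and g: "smooth g"
  have "compsum g (\<lambda>x. a (g x) * 1)" using a smooth_const by (intro compsum.intros)
  then have "smooth (\<lambda>x. a (g x) * 1)"
    by (intro smooth_coinduct[where P="compsum g"]) (auto dest: compsum_step[OF g])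
  then show ?thesis by simp
qed

lemma T0_nth: "taylor0 f $$ n = (deriv ^^ n) f 0 / fact n"
  by (simp add: taylor0_def)

lemma T0_deriv: "taylor0 (deriv f) = fps_deriv (taylor0 f)"
proof (rule fps_ext)
  fix n
  have "fps_deriv (taylor0 f) $$ n = of_nat (n+1) * ((deriv ^^ Suc n) f 0 / fact (Suc n))"
    by (simp add: T0_nth del: funpow.simps fact_Suc)
  also have "\<dots> = (deriv ^^ n) (deriv f) 0 / fact n"
  proof -
    have "(fact (Suc n) :: real) = of_nat (n+1) * fact n" by simp
    moreover have "(fact n :: real) > 0" by simp
    ultimately show ?thesis by (simp add: funpow_deriv_Suc del: funpow.simps fact_Suc)
  qed
  finally show "taylor0 (deriv f) $$ n = fps_deriv (taylor0 f) $$ n" by (simp add: T0_nth)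
qed

lemma derivn_add:
  "smooth u \<Longrightarrow> smooth v \<Longrightarrow> (deriv ^^ n) (\<lambda>x. u x + v x) = (\<lambda>x. (deriv ^^ n) u x + (deriv ^^ n) v x)"
proof (induction n arbitrary: u v)
  case 0 then show ?case by simp
next
  case (Suc n)
  have "(deriv ^^ Suc n) (\<lambda>x. u x + v x) = (deriv ^^ n) (\<lambda>x. deriv u x + deriv v x)"
    using Suc.prems by (simp add: funpow_deriv_Suc deriv_add_fun smooth_diff del: funpow.simps)
  also have "\<dots> = (\<lambda>x. (deriv ^^ n) (deriv u) x + (deriv ^^ n) (deriv v) x)"
    using Suc by (simp add: smooth_deriv)
  finally show ?case by (simp add: funpow_deriv_Suc del: funpow.simps)
qed

lemma derivn_diff:
  "smooth u \<Longrightarrow> smooth v \<Longrightarrow> (deriv ^^ n) (\<lambda>x. u x - v x) = (\<lambda>x. (deriv ^^ n) u x - (deriv ^^ n) v x)"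
proof (induction n arbitrary: u v)
  case 0 then show ?case by simp
next
  case (Suc n)
  have "(deriv ^^ Suc n) (\<lambda>x. u x - v x) = (deriv ^^ n) (\<lambda>x. deriv u x - deriv v x)"
    using Suc.prems by (simp add: funpow_deriv_Suc deriv_diff_fun smooth_diff del: funpow.simps)
  also have "\<dots> = (\<lambda>x. (deriv ^^ n) (deriv u) x - (deriv ^^ n) (deriv v) x)"
    using Suc by (simp add: smooth_deriv)
  finally show ?case by (simp add: funpow_deriv_Suc del: funpow.simps)
qed

lemma T0_add: "smooth u \<Longrightarrow> smooth v \<Longrightarrow> taylor0 (\<lambda>x. u x + v x) = taylor0 u + taylor0 v"
  by (rule fps_ext) (simp add: T0_nth derivn_add add_divide_distrib del: funpow.simps)

lemma T0_diff: "smooth u \<Longrightarrow> smooth v \<Longrightarrow> taylor0 (\<lambda>x. u x - v x) = taylor0 u - taylor0 v"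
  by (rule fps_ext) (simp add: T0_nth derivn_diff diff_divide_distrib del: funpow.simps)

lemma T0_Suc: "taylor0 f $$ Suc n = taylor0 (deriv f) $$ n / of_nat (Suc n)"
  by (simp add: T0_deriv)

lemma T0_mult: "smooth u \<Longrightarrow> smooth v \<Longrightarrow> taylor0 (\<lambda>x. u x * v x) = taylor0 u * taylor0 v"
proof -
  have "\<forall>u v. smooth u \<longrightarrow> smooth v \<longrightarrow> taylor0 (\<lambda>x. u x * v x) $$ n = (taylor0 u * taylor0 v) $$ n" for n
  proof (induction n)
    case 0 then show ?case by (simp add: T0_nth)
  next
    case (Suc n)
    show ?case
    proof (intro allI impI)
      fix u v :: "real \<Rightarrow> real" assume u: "smooth u" and v: "smooth v"
      have du: "\<And>x. u differentiable (at x)" and dv: "\<And>x. v differentiable (at x)"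
        using u v smooth_diff by blast+
      have su': "smooth (deriv u)" and sv': "smooth (deriv v)" using u v smooth_deriv by blast+
      have "taylor0 (\<lambda>x. u x * v x) $$ Suc n = taylor0 (\<lambda>x. deriv u x * v x + u x * deriv v x) $$ n / of_nat (Suc n)"
        by (simp only: T0_Suc deriv_mult_fun[OF du dv])
      also have "taylor0 (\<lambda>x. deriv u x * v x + u x * deriv v x) = taylor0 (\<lambda>x. deriv u x * v x) + taylor0 (\<lambda>x. u x * deriv v x)"
        using su' sv' u v by (intro T0_add smooth_mult)
      also have "(taylor0 (\<lambda>x. deriv u x * v x) + taylor0 (\<lambda>x. u x * deriv v x)) $$ n
          = (taylor0 (deriv u) * taylor0 v) $$ n + (taylor0 u * taylor0 (deriv v)) $$ n"
        using Suc su' sv' u v by simp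
      also have "\<dots> = fps_deriv (taylor0 u * taylor0 v) $$ n"
        by (simp add: T0_deriv algebra_simps del: fps_deriv_nth)
      finally show "taylor0 (\<lambda>x. u x * v x) $$ Suc n = (taylor0 u * taylor0 v) $$ Suc n"
        by (simp del: of_nat_Suc fps_deriv_mult)
    qed
  qed
  then show "smooth u \<Longrightarrow> smooth v \<Longrightarrow> ?thesis" by (intro fps_ext) blast
qed

lemma T0_comp:
  assumes g: "smooth g" and g0: "g 0 = 0"
  shows "smooth f \<Longrightarrow> taylor0 (\<lambda>x. f (g x)) = taylor0 f oo taylor0 g"
proof -
  have tg0: "taylor0 g $$ 0 = 0" using g0 by (simp add: T0_nth)
  have "\<forall>f. smooth f \<longrightarrow> taylor0 (\<lambda>x. f (g x)) $$ n = (taylor0 f oo taylor0 g) $$ n" for n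
  proof (induction n rule: less_induct)
    case (less n)
    show ?case
    proof (cases n)
      case 0 then show ?thesis using g0 by (simp add: T0_nth)
    next
      case (Suc m)
      show ?thesis
      proof (intro allI impI)
        fix f :: "real \<Rightarrow> real" assume f: "smooth f"
        have df: "\<And>x. f differentiable (at x)" and dg: "\<And>x. g differentiable (at x)"
          using f g smooth_diff by blast+
        have sf': "smooth (deriv f)" and sg': "smooth (deriv g)" using f g smooth_deriv by blast+
        have sfg: "smooth (\<lambda>x. deriv f (g x))" using sf' g by (rule smooth_comp)
        have "taylor0 (\<lambda>x. f (g x)) $$ Suc m = taylor0 (\<lambda>x. deriv f (g x) * deriv g x) $$ m / of_nat (Suc m)"
          by (simp only: T0_Suc deriv_comp_fun[OF df dg])
        also have "taylor0 (\<lambda>x. deriv f (g x) * deriv g x) = taylor0 (\<lambda>x. deriv f (g x)) * taylor0 (deriv g)"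
          using sfg sg' by (rule T0_mult)
        also have "(taylor0 (\<lambda>x. deriv f (g x)) * taylor0 (deriv g)) $$ m
            = ((taylor0 (deriv f) oo taylor0 g) * taylor0 (deriv g)) $$ m"
        proof -
          have "\<forall>i\<in>{0..m}. taylor0 (\<lambda>x. deriv f (g x)) $$ i = (taylor0 (deriv f) oo taylor0 g) $$ i"
            using less Suc sf' by auto
          then show ?thesis by (simp add: fps_mult_nth)
        qed
        also have "\<dots> = fps_deriv (taylor0 f oo taylor0 g) $$ m"
          by (simp add: T0_deriv fps_compose_deriv[OF tg0] del: fps_deriv_nth)
        finally show "taylor0 (\<lambda>x. f (g x)) $$ n = (taylor0 f oo taylor0 g) $$ n"
          using Suc by (simp del: of_nat_Suc)
      qed
    qed
  qed
  then show "smooth f \<Longrightarrow> ?thesis" by (intro fps_ext) blast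
qed

lemma derivn_ident: "(deriv ^^ Suc (Suc n)) (\<lambda>x::real. x) = (\<lambda>x. 0)"
  by (induction n) (simp_all add: deriv_ident deriv_const funpow_deriv_Suc del: funpow.simps)

lemma T0_ident: "taylor0 (\<lambda>x. x) = fps_X"
proof (rule fps_ext)
  fix n
  show "taylor0 (\<lambda>x. x) $$ n = fps_X $$ n"
  proof (cases n)
    case 0 then show ?thesis by (simp add: T0_nth)
  next
    case (Suc m)
    show ?thesis
    proof (cases m)
      case 0 then show ?thesis using Suc by (simp add: T0_nth deriv_ident fps_X_nth funpow_deriv_Suc del: funpow.simps)
    next
      case (Suc k) then show ?thesis using \<open>n = Suc m\<close> by (simp only: T0_nth derivn_ident) (simp add: fps_X_nth)
    qed
  qed
qed



lemma glue_deriv: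
  fixes k k' :: "real \<Rightarrow> real"
  assumes dk: "\<And>x. (k has_real_derivative k' x) (at x)" and k0: "k 0 = 0" and k'0: "k' 0 = 0"
  shows "((\<lambda>x. if x < 0 then k x else 0) has_real_derivative (if x < 0 then k' x else 0)) (at x)"
proof -
  consider "x < 0" | "x > 0" | "x = 0" by linarith
  then show ?thesis
  proof cases
    case 1
    have "((\<lambda>x. if x < 0 then k x else 0) has_real_derivative k' x) (at x)"
      by (rule has_field_derivative_transform_within_open[OF dk[of x], where S="{..<0}"]) (use 1 in auto)
    then show ?thesis using 1 by simp
  next
    case 2
    have "((\<lambda>x. 0::real) has_real_derivative 0) (at x)" by simp
    then have "((\<lambda>x. if x < 0 then k x else 0) has_real_derivative 0) (at x)"
      by (rule has_field_derivative_transform_within_open[where S="{0<..}"]) (use 2 in auto)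
    then show ?thesis using 2 by simp
  next
    case 3
    let ?H = "\<lambda>x. if x < 0 then k x else (0::real)"
    have lim: "((\<lambda>y. (k y - k 0) / (y - 0)) \<longlongrightarrow> 0) (at 0)"
      using dk[of 0] k'0 by (simp add: has_field_derivative_iff)
    have L: "((\<lambda>y. (?H y - ?H 0) / (y - 0)) \<longlongrightarrow> 0) (at_left 0)"
    proof -
      have "((\<lambda>y. (k y - k 0) / (y - 0)) \<longlongrightarrow> 0) (at_left 0)"
        using lim filterlim_at_split by blast
      moreover have ev: "eventually (\<lambda>y. (k y - k 0) / (y - 0) = (?H y - ?H 0) / (y - 0)) (at_left (0::real))"
        by (rule eventually_at_leftI[of "-1"]) (auto simp: k0)
      ultimately show ?thesis using iffD1[OF tendsto_cong[OF ev]] by blast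
    qed
    have R: "((\<lambda>y. (?H y - ?H 0) / (y - 0)) \<longlongrightarrow> 0) (at_right 0)"
    proof -
      have ev: "eventually (\<lambda>y. 0 = (?H y - ?H 0) / (y - 0)) (at_right (0::real))"
        by (rule eventually_at_rightI[of _ "1"]) auto
      have "((\<lambda>y. 0::real) \<longlongrightarrow> 0) (at_right 0)" by simp
      then show ?thesis using iffD1[OF tendsto_cong[OF ev]] by blast
    qed
    have "((\<lambda>y. (?H y - ?H 0) / (y - 0)) \<longlongrightarrow> 0) (at 0)"
      using L R by (rule filterlim_split_at)
    then show ?thesis using 3 by (simp add: has_field_derivative_iff)
  qed
qed

lemma glue_smooth:
  fixes k :: "real \<Rightarrow> real"
  assumes sk: "smooth k" and flat: "\<And>n. (deriv ^^ n) k 0 = 0"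
  shows "smooth (\<lambda>x. if x < 0 then k x else 0)"
proof -
  define G where "G n = (\<lambda>x. if x < 0 then (deriv ^^ n) k x else 0)" for n
  have dG: "(G n has_real_derivative G (Suc n) x) (at x)" for n x
  proof -
    have "((deriv ^^ n) k has_real_derivative (deriv ^^ Suc n) k y) (at y)" for y
    proof -
      have "(deriv ^^ n) k differentiable (at y)" using sk unfolding smooth_def by blast
      then show ?thesis by (simp add: DERIV_deriv_iff_real_differentiable[symmetric])
    qed
    from glue_deriv[OF this flat flat] show ?thesis unfolding G_def .
  qed
  have eq: "(deriv ^^ n) (\<lambda>x. if x < 0 then k x else 0) = G n" for n
  proof (induction n)
    case 0 show ?case unfolding G_def by (rule ext) (simp add: funpow_0)
  next
    case (Suc n)
    have "deriv (G n) = G (Suc n)" by (rule ext, rule DERIV_imp_deriv, rule dG)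
    then show ?case using Suc by simp
  qed
  show ?thesis unfolding smooth_def eq using dG real_differentiable_def by blast
qed



context
  fixes f :: "real \<Rightarrow> real"
  assumes dm: "diffeo_minus f" and f0: "f 0 = 0"
begin

lemma dm_bij: "bij f" and dm_smooth: "smooth f" and dm_smooth_inv: "smooth (inv f)"
  and dm_dec: "x < y \<Longrightarrow> f y < f x"
  using dm unfolding diffeo_minus_def diffeo_def by auto

lemma dm_fi: "f (inv f y) = y"
  using dm_bij bij_is_surj surj_f_inv_f by metis

lemma dm_if: "inv f (f x) = x"
  using dm_bij bij_is_inj inv_f_f by metis

lemma dm_inv0: "inv f 0 = 0"
  using dm_if[of 0] f0 by simp

lemma dm_neg: "x < 0 \<Longrightarrow> f x > 0"
  using dm_dec[of x 0] f0 by simp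

lemma dm_pos: "x > 0 \<Longrightarrow> f x < 0"
  using dm_dec[of 0 x] f0 by simp

lemma dm_inv_dec: "x < y \<Longrightarrow> inv f y < inv f x"
proof (rule ccontr)
  assume xy: "x < y" and "\<not> inv f y < inv f x"
  then have "inv f x \<le> inv f y" by simp
  then consider "inv f x = inv f y" | "inv f x < inv f y" by linarith
  then show False
  proof cases
    case 1 then have "f (inv f x) = f (inv f y)" by simp
    then show False using xy dm_fi by simp
  next
    case 2 then have "f (inv f y) < f (inv f x)" by (rule dm_dec)
    then show False using xy dm_fi by simp
  qed
qed

lemma dm_inv_neg: "y < 0 \<Longrightarrow> inv f y > 0"
  using dm_inv_dec[of y 0] dm_inv0 by simp

lemma dm_inv_pos: "y > 0 \<Longrightarrow> inv f y < 0"
  using dm_inv_dec[of 0 y] dm_inv0 by simp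

lemma dm_T0_0: "taylor0 f $$ 0 = 0"
  using f0 by (simp add: T0_nth)

lemma dm_T0_inv: "taylor0 f oo taylor0 (inv f) = fps_X"
proof -
  have "taylor0 (\<lambda>x. f (inv f x)) = taylor0 f oo taylor0 (inv f)"
    by (rule T0_comp[OF dm_smooth_inv dm_inv0 dm_smooth])
  moreover have "(\<lambda>x. f (inv f x)) = (\<lambda>x. x)" using dm_fi by simp
  ultimately show ?thesis using T0_ident by simp
qed

lemma dm_T0_1: "taylor0 f $$ 1 < 0"
proof -
  have i0: "taylor0 (inv f) $$ 0 = 0" using dm_inv0 by (simp add: T0_nth)
  have "(taylor0 f oo taylor0 (inv f)) $$ 1 = taylor0 f $$ 1 * taylor0 (inv f) $$ 1"
    by (rule compose_nth_1[OF i0])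
  then have "taylor0 f $$ 1 * taylor0 (inv f) $$ 1 = 1" using dm_T0_inv by (simp add: fps_X_nth)
  then have "taylor0 f $$ 1 \<noteq> 0" by (metis mult_zero_left zero_neq_one)
  moreover have "taylor0 f $$ 1 = deriv f 0" by (simp add: T0_nth)
  moreover have "\<not> deriv f 0 > 0"
  proof
    assume pos: "deriv f 0 > 0"
    have "DERIV f 0 :> deriv f 0" using smooth_DERIV[OF dm_smooth] .
    from DERIV_pos_inc_right[OF this pos] obtain d where "d > 0" "\<forall>h>0. h < d \<longrightarrow> f 0 < f (0 + h)" by blast
    then have "f 0 < f (d/2)" by auto
    moreover have "f (d/2) < f 0" using dm_dec[of 0 "d/2"] \<open>d > 0\<close> by simp
    ultimately show False by simp
  qed
  ultimately show ?thesis by linarith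
qed

end


lemma flat_from_T0:
  assumes "taylor0 k = 0"
  shows "(deriv ^^ n) k 0 = 0"
proof -
  have "taylor0 k $$ n = 0" using assms by simp
  then show ?thesis by (simp add: T0_nth del: funpow.simps)
qed

lemma conj_part:
  fixes f g :: "real \<Rightarrow> real"
  assumes df: "diffeo_minus f" and dg: "diffeo_minus g" and f0: "f 0 = 0" and g0: "g 0 = 0"
    and ff: "\<And>x. f (f x) = g (g x)" and Teq: "taylor0 f = taylor0 g"
  shows "\<exists>h. diffeo_plus h \<and> f = inv h \<circ> g \<circ> h"
proof -
  have sf: "smooth f" and sfi: "smooth (inv f)" and fi: "\<And>y. f (inv f y) = y" and if_: "\<And>x. inv f (f x) = x"
    and fi0: "inv f 0 = 0" and fneg: "\<And>x. x < 0 \<Longrightarrow> f x > 0" and fpos: "\<And>x. x > 0 \<Longrightarrow> f x < 0"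
    and fidec: "\<And>x y. x < y \<Longrightarrow> inv f y < inv f x" and fineg: "\<And>y. y < 0 \<Longrightarrow> inv f y > 0"
    and fT: "taylor0 f oo taylor0 (inv f) = fps_X"
    using dm_smooth[OF df f0] dm_smooth_inv[OF df f0] dm_fi[OF df f0] dm_if[OF df f0] dm_inv0[OF df f0]
      dm_neg[OF df f0] dm_pos[OF df f0] dm_inv_dec[OF df f0] dm_inv_neg[OF df f0] dm_T0_inv[OF df f0] by auto
  have sg: "smooth g" and sgi: "smooth (inv g)" and gi: "\<And>y. g (inv g y) = y" and ig: "\<And>x. inv g (g x) = x"
    and gi0: "inv g 0 = 0" and gneg: "\<And>x. x < 0 \<Longrightarrow> g x > 0" and gpos: "\<And>x. x > 0 \<Longrightarrow> g x < 0"
    and gdec: "\<And>x y. x < y \<Longrightarrow> g y < g x" and gineg: "\<And>y. y < 0 \<Longrightarrow> inv g y > 0"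
    and gT: "taylor0 g oo taylor0 (inv g) = fps_X"
    using dm_smooth[OF dg g0] dm_smooth_inv[OF dg g0] dm_fi[OF dg g0] dm_if[OF dg g0] dm_inv0[OF dg g0]
      dm_neg[OF dg g0] dm_pos[OF dg g0] dm_dec[OF dg g0] dm_inv_neg[OF dg g0] dm_T0_inv[OF dg g0] by auto
  define k where "k = (\<lambda>x. g (inv f x) - x)"
  define k' where "k' = (\<lambda>x. f (inv g x) - x)"
  have sgf: "smooth (\<lambda>x. g (inv f x))" by (rule smooth_comp[OF sg sfi])
  have sfg: "smooth (\<lambda>x. f (inv g x))" by (rule smooth_comp[OF sf sgi])
  have sk: "smooth k" unfolding k_def by (rule smooth_diff_fun[OF sgf smooth_ident])
  have sk': "smooth k'" unfolding k'_def by (rule smooth_diff_fun[OF sfg smooth_ident])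
  have Tk: "taylor0 k = 0"
  proof -
    have "taylor0 k = taylor0 (\<lambda>x. g (inv f x)) - taylor0 (\<lambda>x. x)" unfolding k_def
      by (rule T0_diff[OF sgf smooth_ident])
    also have "taylor0 (\<lambda>x. g (inv f x)) = taylor0 g oo taylor0 (inv f)"
      by (rule T0_comp[OF sfi fi0 sg])
    finally show ?thesis using Teq fT by (simp add: T0_ident)
  qed
  have Tk': "taylor0 k' = 0"
  proof -
    have "taylor0 k' = taylor0 (\<lambda>x. f (inv g x)) - taylor0 (\<lambda>x. x)" unfolding k'_def
      by (rule T0_diff[OF sfg smooth_ident])
    also have "taylor0 (\<lambda>x. f (inv g x)) = taylor0 f oo taylor0 (inv g)"
      by (rule T0_comp[OF sgi gi0 sf])
    finally show ?thesis using Teq gT by (simp add: T0_ident)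
  qed
  define h where "h = (\<lambda>x. x + (if x < 0 then k x else 0))"
  define h' where "h' = (\<lambda>x. x + (if x < 0 then k' x else 0))"
  have sh: "smooth h" unfolding h_def
    by (rule smooth_add[OF smooth_ident glue_smooth[OF sk flat_from_T0[OF Tk]]])
  have sh': "smooth h'" unfolding h'_def
    by (rule smooth_add[OF smooth_ident glue_smooth[OF sk' flat_from_T0[OF Tk']]])
  have hx: "h x = (if x < 0 then g (inv f x) else x)" for x unfolding h_def k_def by simp
  have h'x: "h' x = (if x < 0 then f (inv g x) else x)" for x unfolding h'_def k'_def by simp
  have hneg: "x < 0 \<Longrightarrow> h x < 0" for x using hx fineg gpos by auto
  have h'neg: "x < 0 \<Longrightarrow> h' x < 0" for x using h'x gineg fpos by auto
  have h'h: "h' (h x) = x" for x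
    using hx h'x hneg ig fi by (cases "x < 0") auto
  have hh': "h (h' x) = x" for x
    using hx h'x h'neg if_ gi by (cases "x < 0") auto
  have invh: "inv h = h'"
    by (rule inv_unique_comp) (auto simp: fun_eq_iff h'h hh')
  have bijh: "bij h"
    using h'h hh' by (metis bijI' )
  have smh: "strict_mono h"
  proof (rule strict_monoI)
    fix x y :: real assume xy: "x < y"
    consider "y < 0" | "x < 0" "y \<ge> 0" | "x \<ge> 0" using xy by linarith
    then show "h x < h y"
    proof cases
      case 1
      then have "inv f y < inv f x" using fidec xy by blast
      then have "g (inv f x) < g (inv f y)" using gdec by blast
      then show ?thesis using hx 1 xy by simp
    next
      case 2 then show ?thesis using hneg hx by force
    next
      case 3 then show ?thesis using hx xy by simp
    qed
  qed
  have dp: "diffeo_plus h"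
    unfolding diffeo_plus_def diffeo_def using bijh sh sh' invh smh by simp
  have conj: "f = inv h \<circ> g \<circ> h"
  proof (rule ext)
    fix x :: real
    consider "x < 0" | "x = 0" | "x > 0" using less_linear[of x 0] by blast
    then show "f x = (inv h \<circ> g \<circ> h) x"
    proof cases
      case 1
      have "g (h x) = f x" using hx 1 ff[of "inv f x"] fi by simp
      moreover have "f x > 0" using 1 fneg by blast
      ultimately show ?thesis using invh h'x by simp
    next
      case 2 then show ?thesis using invh h'x hx f0 g0 by simp
    next
      case 3
      have "g (h x) = g x" using hx 3 by simp
      moreover have "g x < 0" using 3 gpos by blast
      ultimately show ?thesis using invh h'x ig by simp
    qed
  qed
  show ?thesis using dp conj by blast
qed

theorem theorem3p2:
  fixes f g :: "real \<Rightarrow> real"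
  assumes "diffeo_minus f" and "diffeo_minus g"
    and "f 0 = 0" and "g 0 = 0"
    and "f \<circ> f = g \<circ> g"
    and "taylor0 f oo taylor0 f \<noteq> fps_X"
  shows "taylor0 f = taylor0 g \<and> (\<exists>h. diffeo_plus h \<and> f = inv h \<circ> g \<circ> h)"
proof -
  have ff: "\<And>x. f (f x) = g (g x)" using assms(5) by (metis comp_apply)
  have "taylor0 (\<lambda>x. f (f x)) = taylor0 f oo taylor0 f"
    by (rule T0_comp[OF dm_smooth[OF assms(1,3)] assms(3) dm_smooth[OF assms(1,3)]])
  moreover have "taylor0 (\<lambda>x. g (g x)) = taylor0 g oo taylor0 g"
    by (rule T0_comp[OF dm_smooth[OF assms(2,4)] assms(4) dm_smooth[OF assms(2,4)]])
  ultimately have eq: "taylor0 f oo taylor0 f = taylor0 g oo taylor0 g" using ff by simp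
  have Teq: "taylor0 f = taylor0 g"
    by (rule formal_main[OF dm_T0_0[OF assms(1,3)] dm_T0_0[OF assms(2,4)]
          dm_T0_1[OF assms(1,3)] dm_T0_1[OF assms(2,4)] eq assms(6)])
  show ?thesis using Teq conj_part[OF assms(1-4) ff Teq] by blast
qed


end
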